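(* Let $(D,\sqsubseteq)$ be a dcpo with its Scott topology, $B\subseteq D$, $A\in\mathbf{\Delta}^0_2(D)$, and $0<\alpha<\aleph_1$. (1) If $A\in\mathbf{D}_\alpha(D)$, then there is no $\sqsubseteq$-increasing $(A,1)$-alternating $B$-tree of rank $\alpha$. (2) If $D$ is a continuous domain with basis $B$, the following are equivalent: (i) $A\in\mathbf{D}_\alpha(D)$; (ii) there is no $\sqsubseteq$-increasing $(A,1)$-alternating $B$-tree of rank $\alpha$; (iii) there is no $\ll$-increasing $(A,1)$-alternating $B$-tree of rank $\alpha$.
   Context: Dcpo: poset in which every nonempty directed set has a supremum; Scott topology: open sets are upsets $O$ such that every directed set with supremum in $O$ meets $O$. Way-below: $x\ll y$ iff for every directed $S$ with $y\sqsubseteq\sqcup S$ some $s\in S$ has $x\sqsubseteq s$. Continuous domain with basis $B$: for every $x$, $B\cap\{z:z\ll x\}$ is directed with supremum $x$. $\mathbf{\Sigma}^0_2(D)$: countable unions of differences of Scott open sets; $\mathbf{\Pi}^0_2(D)$: complements; $\mathbf{\Delta}^0_2(D)$: both. Parity: ordinal $\lambda+n$ ($\lambda$ zero or limit, $n<\omega$) has the parity of $n$; $\beta\sim\alpha$ means same parity. $D_\alpha((A_\beta)_{\beta<\alpha})=\bigcup_{\beta<\alpha,\beta\not\sim\alpha}(A_\beta\setminus\bigcup_{\gamma<\beta}A_\gamma)$; $\mathbf{D}_\alpha(D)$ is the class of such sets with all $A_\beta$ Scott open. Trees: a tree is a nonempty set of finite sequences (over some set) closed under prefixes, with root the empty sequence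 $\mathit{nil}$; well-founded means no infinite branch; for well-founded $T$, $\mathrm{rank}_T(\sigma)=\sup\{\mathrm{rank}_T(\sigma a)+1:\sigma a\in T\}$ (with $\sup\emptyset=0$), and the rank of $T$ is $\mathrm{rank}_T(\mathit{nil})$. A $B$-tree is a map $f:T\to B$ with $T$ a tree; its rank is that of $T$. It is $(A,\varepsilon)$-alternating if ($f(\mathit{nil})\in A$ iff $\varepsilon=1$) and $f(\sigma a)\in A\iff f(\sigma)\notin A$ for all $\sigma,\sigma a\in T$. For $\preceq\in\{\sqsubseteq,\ll\}$, $f$ is $\preceq$-increasing if $f(\sigma)\preceq f(\sigma a)$ for all $\sigma,\sigma a\in T$. *)

theory Defs
  imports Main "HOL-Library.Countable_Set"
begin

definition directed :: "'d::order set \<Rightarrow> bool" where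
  "directed S \<longleftrightarrow> S \<noteq> {} \<and> (\<forall>x\<in>S. \<forall>y\<in>S. \<exists>z\<in>S. x \<le> z \<and> y \<le> z)"

definition is_lub :: "'d::order set \<Rightarrow> 'd \<Rightarrow> bool" where
  "is_lub S s \<longleftrightarrow> (\<forall>x\<in>S. x \<le> s) \<and> (\<forall>u. (\<forall>x\<in>S. x \<le> u) \<longrightarrow> s \<le> u)"

text \<open>The dcpo is the whole (ordered) type.\<close>
definition is_dcpo :: "'d::order itself \<Rightarrow> bool" where
  "is_dcpo _ \<longleftrightarrow> (\<forall>S::'d set. S \<noteq> {} \<and> directed S \<longrightarrow> (\<exists>s. is_lub S s))"

definition scott_open :: "'d::order set \<Rightarrow> bool" where
  "scott_open U \<longleftrightarrow> (\<forall>x y. x \<in> U \<and> x \<le> y \<longrightarrow> y \<in> U) \<and>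
     (\<forall>S s. directed S \<and> is_lub S s \<and> s \<in> U \<longrightarrow> S \<inter> U \<noteq> {})"

definition way_below :: "'d::order \<Rightarrow> 'd \<Rightarrow> bool" where
  "way_below x y \<longleftrightarrow> (\<forall>S s. directed S \<and> is_lub S s \<and> y \<le> s \<longrightarrow> (\<exists>z\<in>S. x \<le> z))"

definition continuous_domain_basis :: "'d::order set \<Rightarrow> bool" where
  "continuous_domain_basis B \<longleftrightarrow>
     (\<forall>x. directed {z \<in> B. way_below z x} \<and> is_lub {z \<in> B. way_below z x} x)"

definition Sigma02 :: "'d::order set set" where
  "Sigma02 = {A. \<exists>U V :: nat \<Rightarrow> 'd set. (\<forall>n. scott_open (U n) \<and> scott_open (V n)) \<and>
                  A = (\<Union>n. U n - V n)}"

definition Pi02 :: "'d::order set set" where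
  "Pi02 = {A. - A \<in> Sigma02}"

definition Delta02 :: "'d::order set set" where
  "Delta02 = Sigma02 \<inter> Pi02"

definition zero_or_limit :: "'o::wellorder \<Rightarrow> bool" where
  "zero_or_limit \<beta> \<longleftrightarrow> (\<forall>\<gamma><\<beta>. \<exists>\<delta>. \<gamma> < \<delta> \<and> \<delta> < \<beta>)"

text \<open>beta = lambda + n with n odd, where n is the number of ordinals in [\<lambda>,\<beta>).\<close>
definition odd_ord :: "'o::wellorder \<Rightarrow> bool" where
  "odd_ord \<beta> \<longleftrightarrow> (\<exists>l. zero_or_limit l \<and> l \<le> \<beta> \<and> finite {\<gamma>. l \<le> \<gamma> \<and> \<gamma> < \<beta>}
                     \<and> odd (card {\<gamma>. l \<le> \<gamma> \<and> \<gamma> < \<beta>}))"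

definition same_parity :: "'o::wellorder \<Rightarrow> 'o \<Rightarrow> bool" where
  "same_parity \<beta> \<alpha> \<longleftrightarrow> (odd_ord \<beta> \<longleftrightarrow> odd_ord \<alpha>)"

definition D_op :: "'o::wellorder \<Rightarrow> ('o \<Rightarrow> 'd set) \<Rightarrow> 'd set" where
  "D_op \<alpha> As = (\<Union>\<beta>\<in>{\<beta>. \<beta> < \<alpha> \<and> \<not> same_parity \<beta> \<alpha>}. As \<beta> - (\<Union>\<gamma>\<in>{\<gamma>. \<gamma> < \<beta>}. As \<gamma>))"

definition D_class :: "'o::wellorder \<Rightarrow> 'd::order set set" where
  "D_class \<alpha> = {X. \<exists>As :: 'o \<Rightarrow> 'd set. (\<forall>\<beta><\<alpha>. scott_open (As \<beta>)) \<and> X = D_op \<alpha> As}"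

definition is_tree :: "'a list set \<Rightarrow> bool" where
  "is_tree T \<longleftrightarrow> T \<noteq> {} \<and> (\<forall>\<sigma> \<tau>. \<sigma> @ \<tau> \<in> T \<longrightarrow> \<sigma> \<in> T)"

text \<open>rho is the rank function of T with values in the well-order:
  rho(s) is the least ordinal strictly above all ranks of children of s
  (= sup of rank(child)+1).  Existence of such rho forces well-foundedness.\<close>
definition rank_function :: "'a list set \<Rightarrow> ('a list \<Rightarrow> 'o::wellorder) \<Rightarrow> bool" where
  "rank_function T \<rho> \<longleftrightarrow> (\<forall>\<sigma>\<in>T.
      (\<forall>a. \<sigma> @ [a] \<in> T \<longrightarrow> \<rho> (\<sigma> @ [a]) < \<rho> \<sigma>) \<and>
      (\<forall>\<gamma>. (\<forall>a. \<sigma> @ [a] \<in> T \<longrightarrow> \<rho> (\<sigma> @ [a]) < \<gamma>) \<longrightarrow> \<rho> \<sigma> \<le> \<gamma>))"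

definition tree_has_rank :: "'a list set \<Rightarrow> 'o::wellorder \<Rightarrow> bool" where
  "tree_has_rank T \<alpha> \<longleftrightarrow> (\<exists>\<rho>. rank_function T \<rho> \<and> \<rho> [] = \<alpha>)"

definition B_tree :: "'d set \<Rightarrow> 'a list set \<Rightarrow> ('a list \<Rightarrow> 'd) \<Rightarrow> bool" where
  "B_tree B T f \<longleftrightarrow> is_tree T \<and> (\<forall>\<sigma>\<in>T. f \<sigma> \<in> B)"

text \<open>(A,eps)-alternating, with eps = 1 encoded as True.\<close>
definition alternating :: "'d set \<Rightarrow> bool \<Rightarrow> 'a list set \<Rightarrow> ('a list \<Rightarrow> 'd) \<Rightarrow> bool" where
  "alternating A eps T f \<longleftrightarrow> (f [] \<in> A \<longleftrightarrow> eps) \<and>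
     (\<forall>\<sigma> a. \<sigma> \<in> T \<and> \<sigma> @ [a] \<in> T \<longrightarrow> (f (\<sigma> @ [a]) \<in> A \<longleftrightarrow> f \<sigma> \<notin> A))"

definition increasing :: "('d \<Rightarrow> 'd \<Rightarrow> bool) \<Rightarrow> 'a list set \<Rightarrow> ('a list \<Rightarrow> 'd) \<Rightarrow> bool" where
  "increasing R T f \<longleftrightarrow> (\<forall>\<sigma> a. \<sigma> \<in> T \<and> \<sigma> @ [a] \<in> T \<longrightarrow> R (f \<sigma>) (f (\<sigma> @ [a])))"

definition inc_alt_tree :: "('d \<Rightarrow> 'd \<Rightarrow> bool) \<Rightarrow> 'd set \<Rightarrow> 'd set \<Rightarrow> 'o::wellorder
     \<Rightarrow> 'a list set \<Rightarrow> ('a list \<Rightarrow> 'd) \<Rightarrow> bool" where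
  "inc_alt_tree R A B \<alpha> T f \<longleftrightarrow> B_tree B T f \<and> tree_has_rank T \<alpha> \<and>
      alternating A True T f \<and> increasing R T f"

end

theory Submission
  imports Defs "HOL-Library.Countable_Set"
begin

lemma wb_le: "way_below x y \<Longrightarrow> x \<le> (y::'d::order)"
proof -
  assume "way_below x y"
  moreover have "directed {y}" by (simp add: directed_def)
  moreover have "is_lub {y} y" by (simp add: is_lub_def)
  ultimately show ?thesis unfolding way_below_def by blast
qed

lemma wb_le_trans: "way_below x y \<Longrightarrow> y \<le> z \<Longrightarrow> way_below x (z::'d::order)"
  unfolding way_below_def by (meson order_trans)

lemma le_wb_trans: "x \<le> y \<Longrightarrow> way_below y z \<Longrightarrow> way_below x (z::'d::order)"
  unfolding way_below_def by (meson order_trans)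

lemma wb_trans: "way_below x y \<Longrightarrow> way_below y z \<Longrightarrow> way_below x (z::'d::order)"
  using wb_le wb_le_trans by blast

lemma part1:
  fixes A B :: "'d::order set" and \<alpha> :: "'o::wellorder" and T :: "'a list set"
  assumes DA: "A \<in> D_class \<alpha>" and tr: "inc_alt_tree (\<le>) A B \<alpha> T f"
  shows False
proof -
  obtain As :: "'o \<Rightarrow> 'd set" where op: "\<forall>\<beta><\<alpha>. scott_open (As \<beta>)" and Aeq: "A = D_op \<alpha> As"
    using DA unfolding D_class_def by blast
  obtain \<rho> :: "'a list \<Rightarrow> 'o" where rf: "rank_function T \<rho>" and r0: "\<rho> [] = \<alpha>"
    using tr unfolding inc_alt_tree_def tree_has_rank_def by blast
  have isT: "is_tree T" and alt: "alternating A True T f" and inc: "increasing (\<le>) T f"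
    using tr unfolding inc_alt_tree_def B_tree_def by auto
  define lev where "lev x = (LEAST \<beta>. (\<beta> < \<alpha> \<and> x \<in> As \<beta>) \<or> \<beta> = \<alpha>)" for x
  have lev_le: "lev x \<le> \<alpha>" for x unfolding lev_def by (rule Least_le) simp
  have lev_prop: "(lev x < \<alpha> \<and> x \<in> As (lev x)) \<or> lev x = \<alpha>" for x
    unfolding lev_def by (rule LeastI[of _ \<alpha>]) simp
  have lev_min: "\<beta> < \<alpha> \<Longrightarrow> x \<in> As \<beta> \<Longrightarrow> lev x \<le> \<beta>" for x \<beta>
    unfolding lev_def by (rule Least_le) simp
  have charA: "x \<in> A \<longleftrightarrow> lev x < \<alpha> \<and> \<not> same_parity (lev x) \<alpha>" for x
  proof
    assume "x \<in> A"
    then obtain \<beta> where b: "\<beta> < \<alpha>" "\<not> same_parity \<beta> \<alpha>" "x \<in> As \<beta>" "\<forall>\<gamma><\<beta>. x \<notin> As \<gamma>"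
      unfolding Aeq D_op_def by auto
    have "lev x \<le> \<beta>" using lev_min b by auto
    hence "lev x < \<alpha>" using b by auto
    hence "x \<in> As (lev x)" using lev_prop[of x] by auto
    hence "lev x = \<beta>" using b(4) \<open>lev x \<le> \<beta>\<close> by (meson order.not_eq_order_implies_strict)
    thus "lev x < \<alpha> \<and> \<not> same_parity (lev x) \<alpha>" using b by auto
  next
    assume h: "lev x < \<alpha> \<and> \<not> same_parity (lev x) \<alpha>"
    hence "x \<in> As (lev x)" using lev_prop[of x] by auto
    moreover have "\<forall>\<gamma><lev x. x \<notin> As \<gamma>" using lev_min h
      by (meson leD order.strict_trans)
    ultimately show "x \<in> A" unfolding Aeq D_op_def using h by auto
  qed
  have lev_mono: "x \<le> y \<Longrightarrow> lev y \<le> lev x" for x y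
  proof -
    assume xy: "x \<le> y"
    show ?thesis
    proof (cases "lev x = \<alpha>")
      case True thus ?thesis using lev_le by simp
    next
      case False
      hence l: "lev x < \<alpha>" "x \<in> As (lev x)" using lev_prop[of x] by auto
      hence "y \<in> As (lev x)" using op xy unfolding scott_open_def by blast
      thus ?thesis using lev_min l by blast
    qed
  qed
  have claim: "\<forall>\<sigma>\<in>T. \<rho> \<sigma> = \<delta> \<longrightarrow> \<delta> \<le> lev (f \<sigma>)" for \<delta>
  proof (induction \<delta> rule: less_induct)
    case (less \<delta>)
    show ?case
    proof (intro ballI impI)
      fix \<sigma> assume sT: "\<sigma> \<in> T" and rs: "\<rho> \<sigma> = \<delta>"
      have ch: "\<forall>a. \<sigma> @ [a] \<in> T \<longrightarrow> \<rho> (\<sigma> @ [a]) < lev (f \<sigma>)"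
      proof (intro allI impI)
        fix a assume cT: "\<sigma> @ [a] \<in> T"
        have lt: "\<rho> (\<sigma> @ [a]) < \<rho> \<sigma>" using rf sT cT unfolding rank_function_def by blast
        hence "\<rho> (\<sigma> @ [a]) \<le> lev (f (\<sigma> @ [a]))" using less rs cT by blast
        moreover have "lev (f (\<sigma> @ [a])) \<le> lev (f \<sigma>)"
          using inc sT cT lev_mono unfolding increasing_def by blast
        moreover have "lev (f (\<sigma> @ [a])) \<noteq> lev (f \<sigma>)"
          using alt sT cT charA unfolding alternating_def by metis
        ultimately show "\<rho> (\<sigma> @ [a]) < lev (f \<sigma>)" by auto
      qed
      show "\<delta> \<le> lev (f \<sigma>)" using rf sT ch rs unfolding rank_function_def by blast
    qed
  qed
  have "[] \<in> T" using isT unfolding is_tree_def by (metis append_Nil ex_in_conv)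
  hence "\<alpha> \<le> lev (f [])" using claim r0 by blast
  hence "lev (f []) = \<alpha>" using lev_le by (meson order.antisym)
  hence "f [] \<notin> A" using charA by simp
  moreover have "f [] \<in> A" using alt unfolding alternating_def by simp
  ultimately show False by simp
qed

lemma dir_ub: "directed S \<Longrightarrow> x \<in> S \<Longrightarrow> y \<in> S \<Longrightarrow> \<exists>z\<in>S. x \<le> z \<and> y \<le> z"
  unfolding directed_def by blast

lemma dir_ne: "directed S \<Longrightarrow> \<exists>x. x \<in> S"
  unfolding directed_def by blast

lemma scott_up: "scott_open U \<Longrightarrow> x \<in> U \<Longrightarrow> x \<le> y \<Longrightarrow> y \<in> U"
  unfolding scott_open_def by blast

lemma scott_hit: "scott_open U \<Longrightarrow> directed S \<Longrightarrow> is_lub S s \<Longrightarrow> s \<in> U \<Longrightarrow> \<exists>u\<in>S. u \<in> U"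
  unfolding scott_open_def by blast

lemma wb_hit: "way_below x y \<Longrightarrow> directed S \<Longrightarrow> is_lub S s \<Longrightarrow> y \<le> s \<Longrightarrow> \<exists>z\<in>S. x \<le> z"
  unfolding way_below_def by blast

lemma interpolate:
  fixes B :: "'d::order set"
  assumes cb: "continuous_domain_basis B" and xs: "way_below x s"
  shows "\<exists>e\<in>B. way_below x e \<and> way_below e s"
proof -
  let ?S = "{d \<in> B. \<exists>e\<in>B. way_below d e \<and> way_below e s}"
  have dir: "\<And>y. directed {z \<in> B. way_below z y}" and lub: "\<And>y. is_lub {z \<in> B. way_below z y} y"
    using cb unfolding continuous_domain_basis_def by auto
  have "directed ?S"
  proof -
    obtain e where e: "e \<in> {z \<in> B. way_below z s}" using dir_ne[OF dir[of s]] by blast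
    obtain d where d: "d \<in> {z \<in> B. way_below z e}" using dir_ne[OF dir[of e]] by blast
    have ne: "?S \<noteq> {}" using e d by auto
    have "\<forall>x\<in>?S. \<forall>y\<in>?S. \<exists>z\<in>?S. x \<le> z \<and> y \<le> z"
    proof (intro ballI)
      fix x y assume x: "x \<in> ?S" and y: "y \<in> ?S"
      then obtain e1 e2 where e12: "e1 \<in> B" "way_below x e1" "way_below e1 s" "e2 \<in> B"
        "way_below y e2" "way_below e2 s" by auto
      have "e1 \<in> {z \<in> B. way_below z s}" "e2 \<in> {z \<in> B. way_below z s}" using e12 by auto
      then obtain e3 where e3: "e3 \<in> {z \<in> B. way_below z s}" "e1 \<le> e3" "e2 \<le> e3"
        using dir_ub[OF dir[of s]] by blast
      have "way_below x e3" "way_below y e3" using wb_le_trans e12 e3 by blast+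
      hence "x \<in> {z \<in> B. way_below z e3}" "y \<in> {z \<in> B. way_below z e3}" using x y by auto
      then obtain z where z: "z \<in> {z \<in> B. way_below z e3}" "x \<le> z" "y \<le> z"
        using dir_ub[OF dir[of e3]] by blast
      have "z \<in> ?S" using z e3 by auto
      thus "\<exists>z\<in>?S. x \<le> z \<and> y \<le> z" using z by blast
    qed
    thus ?thesis using ne unfolding directed_def by blast
  qed
  moreover have "is_lub ?S s"
    unfolding is_lub_def
  proof (intro conjI allI impI ballI)
    fix d assume "d \<in> ?S" thus "d \<le> s" using wb_le wb_trans by blast
  next
    fix u assume u: "\<forall>x\<in>?S. x \<le> u"
    have "\<forall>e\<in>{z \<in> B. way_below z s}. e \<le> u"
    proof
      fix e assume e: "e \<in> {z \<in> B. way_below z s}"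
      have "\<forall>d\<in>{z \<in> B. way_below z e}. d \<le> u" using u e by blast
      thus "e \<le> u" using lub[of e] unfolding is_lub_def by blast
    qed
    thus "s \<le> u" using lub[of s] unfolding is_lub_def by blast
  qed
  ultimately have "\<exists>z\<in>?S. x \<le> z" using wb_hit[OF xs] by blast
  then obtain z e where "e \<in> B" "way_below z e" "way_below e s" "x \<le> z" by blast
  thus ?thesis using le_wb_trans[of x z e] by blast
qed

lemma wb_union_open:
  fixes C :: "'d::order set"
  fixes B :: "'d::order set"
  assumes cb: "continuous_domain_basis B"
  shows "scott_open {x. \<exists>c\<in>C. way_below c x}"
  unfolding scott_open_def
proof (intro conjI allI impI)
  fix x y :: 'd assume "x \<in> {x. \<exists>c\<in>C. way_below c x} \<and> x \<le> y"
  thus "y \<in> {x. \<exists>c\<in>C. way_below c x}" using wb_le_trans by blast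
next
  fix S s assume h: "directed S \<and> is_lub S s \<and> s \<in> {x. \<exists>c\<in>C. way_below c x}"
  then obtain c where c: "c \<in> C" "way_below c s" by auto
  then obtain e where e: "way_below c e" "way_below e s" using interpolate[OF cb] by blast
  then obtain z where "z \<in> S" "e \<le> z" using h wb_hit[OF e(2)] by blast
  thus "S \<inter> {x. \<exists>c\<in>C. way_below c x} \<noteq> {}" using c e wb_le_trans by blast
qed

lemma sigma_approx:
  fixes B :: "'d::order set"
  assumes cb: "continuous_domain_basis B" and X: "X \<in> Sigma02" and x: "x \<in> X"
    and b: "way_below b x"
  shows "\<exists>c\<in>B. way_below b c \<and> way_below c x \<and> c \<in> X"
proof -
  obtain U V :: "nat \<Rightarrow> 'd set" where op: "\<forall>n. scott_open (U n) \<and> scott_open (V n)"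
    and Xe: "X = (\<Union>n. U n - V n)" using X unfolding Sigma02_def by blast
  obtain n where n: "x \<in> U n" "x \<notin> V n" using x Xe by auto
  obtain b' where b': "b' \<in> B" "way_below b b'" "way_below b' x" using interpolate[OF cb b] by blast
  have dir: "directed {z \<in> B. way_below z x}" and lub: "is_lub {z \<in> B. way_below z x} x"
    using cb unfolding continuous_domain_basis_def by auto
  have oU: "scott_open (U n)" and oV: "scott_open (V n)" using op by auto
  obtain u where u: "u \<in> {z \<in> B. way_below z x}" "u \<in> U n"
    using scott_hit[OF oU dir lub n(1)] by blast
  have "b' \<in> {z \<in> B. way_below z x}" using b' by auto
  then obtain c where c: "c \<in> {z \<in> B. way_below z x}" "b' \<le> c" "u \<le> c"
    using dir_ub[OF dir _ u(1)] by blast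
  have "c \<in> U n" using scott_up[OF oU u(2) c(3)] .
  moreover have "c \<notin> V n"
  proof
    assume "c \<in> V n"
    moreover have "c \<le> x" using c wb_le by blast
    ultimately have "x \<in> V n" using scott_up[OF oV] by blast
    thus False using n by simp
  qed
  ultimately have "c \<in> X" using Xe by auto
  moreover have "way_below b c" using b' c wb_le_trans by blast
  ultimately show ?thesis using c by blast
qed

lemma seg_infinite:
  fixes l l' :: "'o::wellorder"
  assumes zl: "zero_or_limit l'" and ll: "l < l'"
  shows "infinite {\<gamma>. l \<le> \<gamma> \<and> \<gamma> < l'}"
proof
  let ?S = "{\<gamma>. l \<le> \<gamma> \<and> \<gamma> < l'}"
  assume fin: "finite ?S"
  have ne: "?S \<noteq> {}" using ll by auto
  have M: "Max ?S \<in> ?S" using Max_in[OF fin ne] .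
  then obtain \<delta> where d: "Max ?S < \<delta>" "\<delta> < l'" using zl unfolding zero_or_limit_def by auto
  have "\<delta> \<in> ?S" using M d by auto
  thus False using Max_ge[OF fin] d by fastforce
qed

lemma witness_unique:
  fixes l l' b :: "'o::wellorder"
  assumes "zero_or_limit l" "l \<le> b" "finite {\<gamma>. l \<le> \<gamma> \<and> \<gamma> < b}"
          "zero_or_limit l'" "l' \<le> b" "finite {\<gamma>. l' \<le> \<gamma> \<and> \<gamma> < b}"
  shows "l = l'"
proof (rule ccontr)
  assume "l \<noteq> l'"
  hence "l < l' \<or> l' < l" by auto
  thus False
  proof
    assume h: "l < l'"
    have "{\<gamma>. l \<le> \<gamma> \<and> \<gamma> < l'} \<subseteq> {\<gamma>. l \<le> \<gamma> \<and> \<gamma> < b}" using assms(5) by auto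
    thus False using seg_infinite[OF assms(4) h] assms(3) finite_subset by blast
  next
    assume h: "l' < l"
    have "{\<gamma>. l' \<le> \<gamma> \<and> \<gamma> < l} \<subseteq> {\<gamma>. l' \<le> \<gamma> \<and> \<gamma> < b}" using assms(2) by auto
    thus False using seg_infinite[OF assms(1) h] assms(6) finite_subset by blast
  qed
qed

lemma witness_exists:
  fixes b :: "'o::wellorder"
  shows "\<exists>l. zero_or_limit l \<and> l \<le> b \<and> finite {\<gamma>. l \<le> \<gamma> \<and> \<gamma> < b}"
proof -
  define l where "l = (LEAST l. finite {\<gamma>. l \<le> \<gamma> \<and> \<gamma> < b})"
  have fb: "finite {\<gamma>. b \<le> \<gamma> \<and> \<gamma> < b}" using leD by (metis (no_types, lifting) empty_Collect_eq finite.emptyI)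
  have fin: "finite {\<gamma>. l \<le> \<gamma> \<and> \<gamma> < b}" unfolding l_def by (rule LeastI[of "\<lambda>l. finite {\<gamma>. l \<le> \<gamma> \<and> \<gamma> < b}" b, OF fb])
  have lb: "l \<le> b" unfolding l_def by (rule Least_le[of "\<lambda>l. finite {\<gamma>. l \<le> \<gamma> \<and> \<gamma> < b}" b, OF fb])
  have "zero_or_limit l"
    unfolding zero_or_limit_def
  proof (intro allI impI)
    fix g assume g: "g < l"
    show "\<exists>d. g < d \<and> d < l"
    proof (rule ccontr)
      assume n: "\<not> ?thesis"
      have "{\<gamma>. g \<le> \<gamma> \<and> \<gamma> < b} \<subseteq> insert g {\<gamma>. l \<le> \<gamma> \<and> \<gamma> < b}"
      proof
        fix x assume "x \<in> {\<gamma>. g \<le> \<gamma> \<and> \<gamma> < b}"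
        thus "x \<in> insert g {\<gamma>. l \<le> \<gamma> \<and> \<gamma> < b}" using n
          by (metis (mono_tags, lifting) insertCI le_less mem_Collect_eq not_le)
      qed
      hence "finite {\<gamma>. g \<le> \<gamma> \<and> \<gamma> < b}" using fin finite_subset by blast
      hence "l \<le> g" unfolding l_def by (rule Least_le)
      thus False using g by simp
    qed
  qed
  thus ?thesis using fin lb by blast
qed

lemma odd_ord_iff:
  fixes l b :: "'o::wellorder"
  assumes "zero_or_limit l" "l \<le> b" "finite {\<gamma>. l \<le> \<gamma> \<and> \<gamma> < b}"
  shows "odd_ord b \<longleftrightarrow> odd (card {\<gamma>. l \<le> \<gamma> \<and> \<gamma> < b})"
  using witness_unique[OF assms] assms unfolding odd_ord_def by metis

lemma odd_succ:
  fixes g s :: "'o::wellorder"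
  assumes gs: "g < s" and im: "\<forall>d. g < d \<longrightarrow> s \<le> d"
  shows "odd_ord s \<longleftrightarrow> \<not> odd_ord g"
proof -
  obtain l where l: "zero_or_limit l" "l \<le> g" "finite {\<gamma>. l \<le> \<gamma> \<and> \<gamma> < g}"
    using witness_exists by blast
  have eq: "{\<gamma>. l \<le> \<gamma> \<and> \<gamma> < s} = insert g {\<gamma>. l \<le> \<gamma> \<and> \<gamma> < g}"
  proof (intro set_eqI iffI)
    fix x assume "x \<in> {\<gamma>. l \<le> \<gamma> \<and> \<gamma> < s}"
    hence x: "l \<le> x" "x < s" by auto
    have "x \<le> g" using im x(2) by (meson leD leI)
    thus "x \<in> insert g {\<gamma>. l \<le> \<gamma> \<and> \<gamma> < g}" using x by (auto simp: le_less)
  next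
    fix x assume "x \<in> insert g {\<gamma>. l \<le> \<gamma> \<and> \<gamma> < g}"
    thus "x \<in> {\<gamma>. l \<le> \<gamma> \<and> \<gamma> < s}" using l(2) gs by auto
  qed
  have fs: "finite {\<gamma>. l \<le> \<gamma> \<and> \<gamma> < s}" using eq l by simp
  have "card {\<gamma>. l \<le> \<gamma> \<and> \<gamma> < s} = Suc (card {\<gamma>. l \<le> \<gamma> \<and> \<gamma> < g})"
    using eq l(3) by simp
  moreover have "l \<le> s" using l gs by simp
  ultimately show ?thesis using odd_ord_iff[OF l] odd_ord_iff[OF l(1) \<open>l \<le> s\<close> fs] by simp
qed

inductive Good :: "'d::order set \<Rightarrow> 'd set \<Rightarrow> 'o::wellorder \<Rightarrow> 'd \<Rightarrow> bool" for A B where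
  "(\<forall>c. c \<in> B \<and> way_below b c \<and> (c \<in> A \<longleftrightarrow> b \<notin> A) \<longrightarrow> (\<exists>\<gamma><\<beta>. Good A B \<gamma> c)) \<Longrightarrow> Good A B \<beta> b"

lemma Good_iff: "Good A B \<beta> b \<longleftrightarrow>
   (\<forall>c. c \<in> B \<and> way_below b c \<and> (c \<in> A \<longleftrightarrow> b \<notin> A) \<longrightarrow> (\<exists>\<gamma><\<beta>. Good A B \<gamma> c))"
  by (subst Good.simps) blast

lemma Good_mono: "Good A B \<beta> b \<Longrightarrow> \<beta> \<le> \<beta>' \<Longrightarrow> Good A B \<beta>' b"
  unfolding Good_iff[of A B \<beta>] Good_iff[of A B \<beta>'] by (meson less_le_trans)

lemma Good_same: "Good A B \<beta> b \<Longrightarrow> way_below b c \<Longrightarrow> (c \<in> A \<longleftrightarrow> b \<in> A) \<Longrightarrow> Good A B \<beta> c"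
  unfolding Good_iff[of A B \<beta> b] Good_iff[of A B \<beta> c] using wb_trans by blast

lemma fixpar:
  fixes \<beta> \<delta>0 \<alpha> :: "'o::wellorder"
  assumes g: "Good A B \<beta> c" and bd: "\<beta> < \<delta>0"
  shows "\<exists>\<gamma>. Good A B \<gamma> c \<and> (c \<in> A \<longleftrightarrow> \<not> same_parity \<gamma> \<alpha>) \<and> \<beta> \<le> \<gamma> \<and> (\<forall>\<delta>. \<beta> < \<delta> \<longrightarrow> \<gamma> \<le> \<delta>)"
proof (cases "c \<in> A \<longleftrightarrow> \<not> same_parity \<beta> \<alpha>")
  case True thus ?thesis using g by (meson less_imp_le order_refl)
next
  case False
  define s where "s = (LEAST \<delta>. \<beta> < \<delta>)"
  have bs: "\<beta> < s" unfolding s_def by (rule LeastI[of _ \<delta>0]) (rule bd)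
  have im: "\<forall>\<delta>. \<beta> < \<delta> \<longrightarrow> s \<le> \<delta>" unfolding s_def by (simp add: Least_le)
  have "odd_ord s \<longleftrightarrow> \<not> odd_ord \<beta>" using odd_succ[OF bs im] .
  hence "c \<in> A \<longleftrightarrow> \<not> same_parity s \<alpha>" using False unfolding same_parity_def by blast
  moreover have "Good A B s c" using Good_mono g bs by (meson less_imp_le)
  ultimately show ?thesis using bs im by (meson less_imp_le)
qed

lemma main_iii_i:
  fixes A B :: "'d::order set" and \<alpha> :: "'o::wellorder"
  assumes cb: "continuous_domain_basis B"
    and D2: "A \<in> Delta02"
    and P3: "\<And>b. b \<in> B \<Longrightarrow> b \<in> A \<Longrightarrow> \<exists>\<beta><\<alpha>. Good A B \<beta> b"
  shows "A \<in> D_class \<alpha>"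
proof -
  define Pp where "Pp c \<beta> \<longleftrightarrow> Good A B \<beta> c \<and> (c \<in> A \<longleftrightarrow> \<not> same_parity \<beta> \<alpha>)" for c and \<beta> :: 'o
  define As where "As \<beta> = {x. \<exists>c\<in>{c\<in>B. \<exists>\<gamma>\<le>\<beta>. Pp c \<gamma>}. way_below c x}" for \<beta>
  have op: "\<forall>\<beta><\<alpha>. scott_open (As \<beta>)" unfolding As_def using wb_union_open[OF cb] by blast
  have mono: "\<exists>\<gamma>\<le>\<beta>. Pp c \<gamma>" if cB: "c \<in> B" and pb: "Pp b \<beta>" and bc: "way_below b c" for b c \<beta>
  proof (cases "c \<in> A \<longleftrightarrow> b \<in> A")
    case True
    hence "Pp c \<beta>" using pb Good_same bc unfolding Pp_def by blast
    thus ?thesis by blast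
  next
    case False
    obtain \<gamma>0 where g0: "\<gamma>0 < \<beta>" "Good A B \<gamma>0 c"
      using pb cB bc False unfolding Pp_def Good_iff[of A B \<beta> b] by blast
    obtain \<gamma> where "Good A B \<gamma> c" "c \<in> A \<longleftrightarrow> \<not> same_parity \<gamma> \<alpha>" "\<forall>\<delta>. \<gamma>0 < \<delta> \<longrightarrow> \<gamma> \<le> \<delta>"
      using fixpar[OF g0(2) g0(1), of \<alpha>] by blast
    thus ?thesis using g0 unfolding Pp_def by blast
  qed
  have Kapp: "\<exists>c\<in>B. way_below b c \<and> way_below c x \<and> (c \<in> A \<longleftrightarrow> x \<in> A)" if "way_below b x" for b x
  proof (cases "x \<in> A")
    case True
    have "A \<in> Sigma02" using D2 unfolding Delta02_def by blast
    thus ?thesis using sigma_approx[OF cb _ True that] True by blast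
  next
    case False
    have "-A \<in> Sigma02" using D2 unfolding Delta02_def Pi02_def by blast
    thus ?thesis using sigma_approx[OF cb _ _ that, of "-A"] False by auto
  qed
  have bot: "\<exists>b\<in>B. way_below b x" for x
    using cb unfolding continuous_domain_basis_def directed_def by blast
  have inA: "\<exists>\<gamma><\<alpha>. Pp c \<gamma>" if cBA: "c \<in> B" "c \<in> A" for c
  proof -
    obtain \<beta> where b: "\<beta> < \<alpha>" "Good A B \<beta> c" using P3[OF cBA] by blast
    obtain \<gamma> where g: "Good A B \<gamma> c" "c \<in> A \<longleftrightarrow> \<not> same_parity \<gamma> \<alpha>" "\<forall>\<delta>. \<beta> < \<delta> \<longrightarrow> \<gamma> \<le> \<delta>"
      using fixpar[OF b(2) b(1), of \<alpha>] by blast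
    have "\<gamma> \<le> \<alpha>" using g b by blast
    moreover have "\<gamma> \<noteq> \<alpha>" using g cBA unfolding same_parity_def by blast
    ultimately show ?thesis using g unfolding Pp_def by (meson order.not_eq_order_implies_strict)
  qed
  have "x \<in> A \<longleftrightarrow> x \<in> D_op \<alpha> As" for x
  proof -
    define M where "M = {\<beta>. \<exists>c\<in>B. way_below c x \<and> Pp c \<beta>}"
    have inAs: "x \<in> As \<beta> \<longleftrightarrow> (\<exists>\<gamma>\<in>M. \<gamma> \<le> \<beta>)" for \<beta> unfolding As_def M_def by blast
    have Dop: "x \<in> D_op \<alpha> As \<longleftrightarrow> (\<exists>\<beta><\<alpha>. \<not> same_parity \<beta> \<alpha> \<and> x \<in> As \<beta> \<and> (\<forall>\<gamma><\<beta>. x \<notin> As \<gamma>))"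
      unfolding D_op_def by blast
    show ?thesis
    proof (cases "M = {}")
      case True
      have "x \<notin> D_op \<alpha> As" using Dop inAs True by blast
      moreover have "x \<notin> A"
      proof
        assume xA: "x \<in> A"
        obtain b where "b \<in> B" "way_below b x" using bot by blast
        then obtain c where c: "c \<in> B" "way_below c x" "c \<in> A" using Kapp xA by blast
        then obtain \<gamma> where "Pp c \<gamma>" using inA by blast
        hence "\<gamma> \<in> M" using c unfolding M_def by blast
        thus False using True by blast
      qed
      ultimately show ?thesis by blast
    next
      case False
      define m where "m = (LEAST \<beta>. \<beta> \<in> M)"
      have mM: "m \<in> M" unfolding m_def using False by (metis LeastI ex_in_conv)
      have mmin: "\<gamma> \<in> M \<Longrightarrow> m \<le> \<gamma>" for \<gamma> unfolding m_def by (rule Least_le)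
      obtain c0 where c0: "c0 \<in> B" "way_below c0 x" "Pp c0 m" using mM unfolding M_def by blast
      obtain c' where c': "c' \<in> B" "way_below c0 c'" "way_below c' x" "c' \<in> A \<longleftrightarrow> x \<in> A"
        using Kapp[OF c0(2)] by blast
      obtain \<gamma> where g: "\<gamma> \<le> m" "Pp c' \<gamma>" using mono[OF c'(1) c0(3) c'(2)] by blast
      have "\<gamma> \<in> M" using g c' unfolding M_def by blast
      hence "\<gamma> = m" using mmin g by (meson order.antisym)
      hence xpar: "x \<in> A \<longleftrightarrow> \<not> same_parity m \<alpha>" using g c' unfolding Pp_def by blast
      have Dm: "x \<in> D_op \<alpha> As \<longleftrightarrow> m < \<alpha> \<and> \<not> same_parity m \<alpha>"
      proof
        assume "x \<in> D_op \<alpha> As"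
        then obtain \<beta> where b: "\<beta> < \<alpha>" "\<not> same_parity \<beta> \<alpha>" "x \<in> As \<beta>" "\<forall>\<gamma><\<beta>. x \<notin> As \<gamma>"
          using Dop by blast
        have "m \<le> \<beta>" using b(3) inAs mmin by (meson order_trans)
        moreover have "\<not> m < \<beta>" using b(4) inAs mM by blast
        ultimately have "m = \<beta>" by simp
        thus "m < \<alpha> \<and> \<not> same_parity m \<alpha>" using b by simp
      next
        assume h: "m < \<alpha> \<and> \<not> same_parity m \<alpha>"
        have "x \<in> As m" using inAs mM by blast
        moreover have "\<forall>\<gamma><m. x \<notin> As \<gamma>" using inAs mmin by (meson leD le_less_trans)
        ultimately show "x \<in> D_op \<alpha> As" using Dop h by blast
      qed
      show ?thesis
      proof (cases "m < \<alpha>")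
        case True thus ?thesis using xpar Dm by blast
      next
        case False
        have "x \<notin> A"
        proof
          assume "x \<in> A"
          hence "c' \<in> A" using c' by blast
          then obtain \<gamma>' where "\<gamma>' < \<alpha>" "Pp c' \<gamma>'" using inA c' by blast
          moreover hence "\<gamma>' \<in> M" using c' unfolding M_def by blast
          ultimately show False using mmin False by (meson leD le_less_trans)
        qed
        thus ?thesis using Dm False by blast
      qed
    qed
  qed
  hence "A = D_op \<alpha> As" by blast
  thus ?thesis using op unfolding D_class_def by blast
qed

lemma sorted_last_le:
  fixes xs :: "'o::linorder list"
  shows "sorted_wrt (>) xs \<Longrightarrow> x \<in> set xs \<Longrightarrow> last xs \<le> x"
proof (induction xs)
  case Nil thus ?case by simp
next
  case (Cons y ys)
  show ?case
  proof (cases "ys = []")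
    case True thus ?thesis using Cons by simp
  next
    case False
    have "last ys \<in> set ys" using False by simp
    hence "last ys < y" using Cons.prems(1) by simp
    thus ?thesis using Cons False by (cases "x = y") (auto simp: less_imp_le)
  qed
qed

lemma tree_build:
  fixes A B :: "'d::order set" and \<alpha> :: "'o::wellorder"
  assumes inf: "infinite (UNIV :: 'b set)" and cnt: "countable {\<beta>. \<beta> < \<alpha>}"
    and bB: "b \<in> B" and bA: "b \<in> A" and ng: "\<forall>\<beta><\<alpha>. \<not> Good A B \<beta> b"
  shows "\<exists>(T :: 'b list set) f. inc_alt_tree way_below A B \<alpha> T f"
proof -
  define Q where "Q = {\<beta>. \<beta> < \<alpha>}"
  obtain g :: "nat \<Rightarrow> 'b" where g: "inj g" using infinite_countable_subset[OF inf] by blast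
  define e where "e = g \<circ> to_nat_on Q"
  have inj: "inj_on e Q" unfolding e_def
    using cnt g unfolding Q_def by (metis comp_inj_on inj_on_to_nat_on inj_on_subset subset_UNIV)
  define dec where "dec = the_inv_into Q e"
  have dec_e: "\<gamma> \<in> Q \<Longrightarrow> dec (e \<gamma>) = \<gamma>" for \<gamma> unfolding dec_def using the_inv_into_f_f[OF inj] by blast
  have dec_Q: "a \<in> e ` Q \<Longrightarrow> dec a \<in> Q" for a using dec_e by auto
  define Inv where "Inv c \<delta> \<longleftrightarrow> c \<in> B \<and> (\<forall>\<gamma><\<delta>. \<not> Good A B \<gamma> c)" for c and \<delta> :: 'o
  define nxt where "nxt c \<gamma> = (SOME d. d \<in> B \<and> way_below c d \<and> (d \<in> A \<longleftrightarrow> c \<notin> A) \<and> Inv d \<gamma>)" for c \<gamma>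
  have step: "nxt c \<gamma> \<in> B \<and> way_below c (nxt c \<gamma>) \<and> (nxt c \<gamma> \<in> A \<longleftrightarrow> c \<notin> A) \<and> Inv (nxt c \<gamma>) \<gamma>"
    if "Inv c \<delta>" "\<gamma> < \<delta>" for c \<gamma> \<delta>
  proof -
    have "\<not> Good A B \<gamma> c" using that unfolding Inv_def by blast
    hence "\<exists>d. d \<in> B \<and> way_below c d \<and> (d \<in> A \<longleftrightarrow> c \<notin> A) \<and> Inv d \<gamma>"
      unfolding Good_iff[of A B \<gamma> c] Inv_def by blast
    thus ?thesis unfolding nxt_def by (rule someI_ex)
  qed
  define T where "T = {\<sigma>. set \<sigma> \<subseteq> e ` Q \<and> sorted_wrt (>) (\<alpha> # map dec \<sigma>)}"
  define f where "f \<sigma> = foldl nxt b (map dec \<sigma>)" for \<sigma>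
  define \<rho> where "\<rho> \<sigma> = last (\<alpha> # map dec \<sigma>)" for \<sigma>
  have f_snoc: "f (\<sigma> @ [a]) = nxt (f \<sigma>) (dec a)" for \<sigma> a unfolding f_def by simp
  have \<rho>_snoc: "\<rho> (\<sigma> @ [a]) = dec a" for \<sigma> a unfolding \<rho>_def by simp
  have \<rho>_le: "\<sigma> \<in> T \<Longrightarrow> \<rho> \<sigma> \<le> \<alpha>" for \<sigma>
    unfolding \<rho>_def T_def using sorted_last_le[of "\<alpha> # map dec \<sigma>" \<alpha>] by simp
  have prefix: "\<sigma> @ \<tau> \<in> T \<Longrightarrow> \<sigma> \<in> T" for \<sigma> \<tau>
    unfolding T_def by (auto simp: sorted_wrt_append)
  have child: "\<sigma> \<in> T \<Longrightarrow> (\<sigma> @ [a] \<in> T \<longleftrightarrow> a \<in> e ` Q \<and> dec a < \<rho> \<sigma>)" for \<sigma> a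
  proof -
    assume sT: "\<sigma> \<in> T"
    have so: "sorted_wrt (>) (\<alpha> # map dec \<sigma>)" using sT unfolding T_def by blast
    have "(\<forall>x\<in>set (\<alpha> # map dec \<sigma>). dec a < x) \<longleftrightarrow> dec a < \<rho> \<sigma>"
    proof
      assume "\<forall>x\<in>set (\<alpha> # map dec \<sigma>). dec a < x"
      moreover have "last (\<alpha> # map dec \<sigma>) \<in> set (\<alpha> # map dec \<sigma>)" by (rule last_in_set) simp
      ultimately show "dec a < \<rho> \<sigma>" unfolding \<rho>_def by blast
    next
      assume "dec a < \<rho> \<sigma>"
      thus "\<forall>x\<in>set (\<alpha> # map dec \<sigma>). dec a < x"
        using sorted_last_le[OF so] unfolding \<rho>_def by (meson less_le_trans)
    qed
    moreover have "sorted_wrt (>) (\<alpha> # map dec (\<sigma> @ [a])) \<longleftrightarrow>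
        sorted_wrt (>) (\<alpha> # map dec \<sigma>) \<and> (\<forall>x\<in>set (\<alpha> # map dec \<sigma>). dec a < x)"
      using sorted_wrt_append[of "(>)" "\<alpha> # map dec \<sigma>" "[dec a]"] by simp
    ultimately show ?thesis using sT unfolding T_def by auto
  qed
  have isT: "is_tree T"
    unfolding is_tree_def
  proof
    have "[] \<in> T" unfolding T_def by simp
    thus "T \<noteq> {}" by blast
    show "\<forall>\<sigma> \<tau>. \<sigma> @ \<tau> \<in> T \<longrightarrow> \<sigma> \<in> T" using prefix by blast
  qed
  have rf: "rank_function T \<rho>"
    unfolding rank_function_def
  proof (intro ballI conjI allI impI)
    fix \<sigma> a assume sT: "\<sigma> \<in> T" and cT: "\<sigma> @ [a] \<in> T"
    thus "\<rho> (\<sigma> @ [a]) < \<rho> \<sigma>" using child \<rho>_snoc by simp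
  next
    fix \<sigma> \<gamma>' assume sT: "\<sigma> \<in> T" and h: "\<forall>a. \<sigma> @ [a] \<in> T \<longrightarrow> \<rho> (\<sigma> @ [a]) < \<gamma>'"
    show "\<rho> \<sigma> \<le> \<gamma>'"
    proof (rule ccontr)
      assume "\<not> \<rho> \<sigma> \<le> \<gamma>'"
      hence lt: "\<gamma>' < \<rho> \<sigma>" by simp
      hence gQ: "\<gamma>' \<in> Q" using \<rho>_le[OF sT] unfolding Q_def by simp
      have "\<sigma> @ [e \<gamma>'] \<in> T" using child[OF sT] gQ dec_e lt by simp
      hence "\<rho> (\<sigma> @ [e \<gamma>']) < \<gamma>'" using h by blast
      thus False using \<rho>_snoc dec_e gQ by simp
    qed
  qed
  have inv: "\<sigma> \<in> T \<Longrightarrow> Inv (f \<sigma>) (\<rho> \<sigma>)" for \<sigma>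
  proof (induction \<sigma> rule: rev_induct)
    case Nil thus ?case using bB ng unfolding Inv_def f_def \<rho>_def by simp
  next
    case (snoc a \<sigma>)
    have sT: "\<sigma> \<in> T" using prefix snoc.prems by blast
    have "dec a < \<rho> \<sigma>" using child[OF sT] snoc.prems by blast
    thus ?case using step[OF snoc.IH[OF sT]] f_snoc \<rho>_snoc by simp
  qed
  have edge: "f (\<sigma> @ [a]) \<in> B \<and> way_below (f \<sigma>) (f (\<sigma> @ [a])) \<and> (f (\<sigma> @ [a]) \<in> A \<longleftrightarrow> f \<sigma> \<notin> A)"
    if "\<sigma> \<in> T" "\<sigma> @ [a] \<in> T" for \<sigma> a
  proof -
    have "dec a < \<rho> \<sigma>" using child that by blast
    thus ?thesis using step[OF inv[OF that(1)]] f_snoc by simp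
  qed
  have "inc_alt_tree way_below A B \<alpha> T f"
    unfolding inc_alt_tree_def B_tree_def tree_has_rank_def alternating_def increasing_def
  proof (intro conjI)
    show "is_tree T" by (rule isT)
    show "\<forall>\<sigma>\<in>T. f \<sigma> \<in> B" using inv unfolding Inv_def by blast
    show "\<exists>\<rho>. rank_function T \<rho> \<and> \<rho> [] = \<alpha>" using rf unfolding \<rho>_def by auto
    show "(f [] \<in> A) = True" using bA unfolding f_def by simp
    show "\<forall>\<sigma> a. \<sigma> \<in> T \<and> \<sigma> @ [a] \<in> T \<longrightarrow> (f (\<sigma> @ [a]) \<in> A) = (f \<sigma> \<notin> A)" using edge by blast
    show "\<forall>\<sigma> a. \<sigma> \<in> T \<and> \<sigma> @ [a] \<in> T \<longrightarrow> way_below (f \<sigma>) (f (\<sigma> @ [a]))" using edge by blast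
  qed
  thus ?thesis by blast
qed

theorem theorem4p7:
  fixes A B :: "'d::order set" and \<alpha> :: "'o::wellorder"
  assumes "is_dcpo TYPE('d)"
    and "A \<in> Delta02"
    and "\<exists>\<beta>. \<beta> < \<alpha>"
    and "countable {\<beta>. \<beta> < \<alpha>}"
  shows "(A \<in> D_class \<alpha> \<longrightarrow>
            \<not> (\<exists>(T :: 'a list set) f. inc_alt_tree (\<le>) A B \<alpha> T f))
       \<and> (continuous_domain_basis B \<and> infinite (UNIV :: 'b set) \<longrightarrow>
            (A \<in> D_class \<alpha> \<longleftrightarrow> \<not> (\<exists>(T :: 'b list set) f. inc_alt_tree (\<le>) A B \<alpha> T f))
          \<and> (A \<in> D_class \<alpha> \<longleftrightarrow> \<not> (\<exists>(T :: 'b list set) f. inc_alt_tree way_below A B \<alpha> T f)))"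
proof (intro conjI impI)
  show "A \<in> D_class \<alpha> \<Longrightarrow> \<not> (\<exists>(T :: 'a list set) f. inc_alt_tree (\<le>) A B \<alpha> T f)"
    using part1 by blast
next
  assume h: "continuous_domain_basis B \<and> infinite (UNIV :: 'b set)"
  have a: "A \<in> D_class \<alpha> \<Longrightarrow> \<not> (\<exists>(T :: 'b list set) f. inc_alt_tree (\<le>) A B \<alpha> T f)"
    using part1 by blast
  have b: "inc_alt_tree way_below A B \<alpha> T f \<Longrightarrow> inc_alt_tree (\<le>) A B \<alpha> T f" for T :: "'b list set" and f
    unfolding inc_alt_tree_def increasing_def using wb_le by blast
  have c: "\<not> (\<exists>(T :: 'b list set) f. inc_alt_tree way_below A B \<alpha> T f) \<Longrightarrow> A \<in> D_class \<alpha>"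
  proof -
    assume nt: "\<not> (\<exists>(T :: 'b list set) f. inc_alt_tree way_below A B \<alpha> T f)"
    show ?thesis
    proof (rule main_iii_i)
      show "continuous_domain_basis B" using h by blast
      show "A \<in> Delta02" using assms(2) .
      fix b assume bB: "b \<in> B" and bA: "b \<in> A"
      show "\<exists>\<beta><\<alpha>. Good A B \<beta> b"
      proof (rule ccontr)
        assume "\<not> (\<exists>\<beta><\<alpha>. Good A B \<beta> b)"
        hence "\<exists>(T :: 'b list set) f. inc_alt_tree way_below A B \<alpha> T f"
          using tree_build[OF _ assms(4) bB bA] h by blast
        thus False using nt by blast
      qed
    qed
  qed
  show "(A \<in> D_class \<alpha>) = (\<nexists>(T :: 'b list set) f. inc_alt_tree (\<le>) A B \<alpha> T f)"
    using a b c by blast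
  show "(A \<in> D_class \<alpha>) = (\<nexists>(T :: 'b list set) f. inc_alt_tree way_below A B \<alpha> T f)"
    using a b c by blast
qed

end
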